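(* Let $\mathbf{F}$ and $\mathbf{E}$ be normed spaces of functions over a set $X$ and let $T:\mathbf{F}\to\mathbf{E}$ be a bounded linear operator. The following are equivalent: (i) there is $\omega:X\to\mathbb{C}$ such that $Tf=\omega f$ for all $f\in\mathbf{F}$; (ii) $T\mathbf{F}_Y\subset\mathbf{E}_Y$ for every $Y\subset X$; (iii) $T\mathbf{F}_{X\setminus\{x\}}\subset\mathbf{E}_{X\setminus\{x\}}$ for every $x\in X$; (iv) $T^*x_{\mathbf{E}}\in\mathbb{C}x_{\mathbf{F}}$ for every $x\in X$.
   Context: A normed space of functions (NSF) over a set $X$ is a linear subspace of the space of all functions $X\to\mathbb{C}$ with a norm for which every point evaluation $x_{\mathbf{F}}:f\mapsto f(x)$ is a bounded functional. For $Y\subset X$, $\mathbf{F}_Y=\{f\in\mathbf{F}:\ f(x)=0\text{ for all }x\in X\setminus Y\}$. *)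

theory Defs
  imports Complex_Main
begin

definition nsf :: "('x \<Rightarrow> complex) set \<Rightarrow> (('x \<Rightarrow> complex) \<Rightarrow> real) \<Rightarrow> bool" where
  "nsf F N \<longleftrightarrow>
     (\<lambda>_. 0) \<in> F \<and>
     (\<forall>f\<in>F. \<forall>g\<in>F. (\<lambda>x. f x + g x) \<in> F) \<and>
     (\<forall>c. \<forall>f\<in>F. (\<lambda>x. c * f x) \<in> F) \<and>
     (\<forall>f\<in>F. 0 \<le> N f) \<and>
     (\<forall>f\<in>F. N f = 0 \<longleftrightarrow> f = (\<lambda>_. 0)) \<and>
     (\<forall>f\<in>F. \<forall>g\<in>F. N (\<lambda>x. f x + g x) \<le> N f + N g) \<and>
     (\<forall>c. \<forall>f\<in>F. N (\<lambda>x. c * f x) = cmod c * N f) \<and>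
     (\<forall>x. \<exists>C. \<forall>f\<in>F. cmod (f x) \<le> C * N f)"

definition point_eval :: "'x \<Rightarrow> ('x \<Rightarrow> complex) \<Rightarrow> complex" where
  "point_eval x = (\<lambda>f. f x)"

definition bounded_lin_op ::
  "('x \<Rightarrow> complex) set \<Rightarrow> (('x \<Rightarrow> complex) \<Rightarrow> real) \<Rightarrow>
   ('x \<Rightarrow> complex) set \<Rightarrow> (('x \<Rightarrow> complex) \<Rightarrow> real) \<Rightarrow>
   (('x \<Rightarrow> complex) \<Rightarrow> ('x \<Rightarrow> complex)) \<Rightarrow> bool" where
  "bounded_lin_op F NF E NE T \<longleftrightarrow>
     (\<forall>f\<in>F. T f \<in> E) \<and>
     (\<forall>f\<in>F. \<forall>g\<in>F. T (\<lambda>x. f x + g x) = (\<lambda>x. T f x + T g x)) \<and>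
     (\<forall>c. \<forall>f\<in>F. T (\<lambda>x. c * f x) = (\<lambda>x. c * T f x)) \<and>
     (\<exists>C. \<forall>f\<in>F. NE (T f) \<le> C * NF f)"

definition restr_sp :: "('x \<Rightarrow> complex) set \<Rightarrow> 'x set \<Rightarrow> ('x \<Rightarrow> complex) set" where
  "restr_sp F Y = {f \<in> F. \<forall>x. x \<notin> Y \<longrightarrow> f x = 0}"

text \<open>Adjoint action on functionals (functionals on E are restricted to E by
  composition, so T^* phi = phi o T as a functional on F).\<close>
definition adj :: "(('x \<Rightarrow> complex) \<Rightarrow> ('x \<Rightarrow> complex)) \<Rightarrow>
   (('x \<Rightarrow> complex) \<Rightarrow> complex) \<Rightarrow> (('x \<Rightarrow> complex) \<Rightarrow> complex)" where
  "adj T \<phi> = \<phi> \<circ> T"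

end

theory Submission
  imports Defs
begin

theorem proposition2p4:
  fixes F E :: "('x \<Rightarrow> complex) set"
    and NF NE :: "('x \<Rightarrow> complex) \<Rightarrow> real"
    and T :: "('x \<Rightarrow> complex) \<Rightarrow> ('x \<Rightarrow> complex)"
  assumes "nsf F NF" and "nsf E NE" and "bounded_lin_op F NF E NE T"
  shows "((\<exists>\<omega>::'x \<Rightarrow> complex. \<forall>f\<in>F. T f = (\<lambda>x. \<omega> x * f x))
            \<longleftrightarrow> (\<forall>Y. T ` restr_sp F Y \<subseteq> restr_sp E Y))
       \<and> ((\<forall>Y. T ` restr_sp F Y \<subseteq> restr_sp E Y)
            \<longleftrightarrow> (\<forall>x. T ` restr_sp F (UNIV - {x}) \<subseteq> restr_sp E (UNIV - {x})))
       \<and> ((\<forall>x. T ` restr_sp F (UNIV - {x}) \<subseteq> restr_sp E (UNIV - {x}))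
            \<longleftrightarrow> (\<forall>x. \<exists>c::complex. \<forall>f\<in>F. adj T (point_eval x) f = c * point_eval x f))"
proof -
  have TE: "\<And>f. f \<in> F \<Longrightarrow> T f \<in> E" using assms(3) unfolding bounded_lin_op_def by blast
  have Tadd: "\<And>f g. f \<in> F \<Longrightarrow> g \<in> F \<Longrightarrow> T (\<lambda>x. f x + g x) = (\<lambda>x. T f x + T g x)"
    using assms(3) unfolding bounded_lin_op_def by blast
  have Tsc: "\<And>c f. f \<in> F \<Longrightarrow> T (\<lambda>x. c * f x) = (\<lambda>x. c * T f x)"
    using assms(3) unfolding bounded_lin_op_def by blast
  have Fadd: "\<And>f g. f \<in> F \<Longrightarrow> g \<in> F \<Longrightarrow> (\<lambda>x. f x + g x) \<in> F"
    using assms(1) unfolding nsf_def by blast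
  have Fsc: "\<And>c f. f \<in> F \<Longrightarrow> (\<lambda>x. c * f x) \<in> F"
    using assms(1) unfolding nsf_def by blast
  let ?i = "\<exists>\<omega>::'x \<Rightarrow> complex. \<forall>f\<in>F. T f = (\<lambda>x. \<omega> x * f x)"
  let ?ii = "\<forall>Y. T ` restr_sp F Y \<subseteq> restr_sp E Y"
  let ?iii = "\<forall>x. T ` restr_sp F (UNIV - {x}) \<subseteq> restr_sp E (UNIV - {x})"
  let ?iv = "\<forall>x. \<exists>c::complex. \<forall>f\<in>F. adj T (point_eval x) f = c * point_eval x f"
  have 12: "?i \<Longrightarrow> ?ii"
  proof -
    assume ?i
    then obtain \<omega> where w: "\<forall>f\<in>F. T f = (\<lambda>x. \<omega> x * f x)" by blast
    show ?ii unfolding restr_sp_def using w TE by auto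
  qed
  have 23: "?ii \<Longrightarrow> ?iii" by blast
  have 34: "?iii \<Longrightarrow> ?iv"
  proof -
    assume h: ?iii
    have z: "\<And>x f. f \<in> F \<Longrightarrow> f x = 0 \<Longrightarrow> T f x = 0"
    proof -
      fix x f assume "f \<in> F" "f x = 0"
      then have "f \<in> restr_sp F (UNIV - {x})" unfolding restr_sp_def by auto
      then have "T f \<in> restr_sp E (UNIV - {x})" using h by blast
      then show "T f x = 0" unfolding restr_sp_def by auto
    qed
    show ?iv
    proof
      fix x
      show "\<exists>c::complex. \<forall>f\<in>F. adj T (point_eval x) f = c * point_eval x f"
      proof (cases "\<exists>f0\<in>F. f0 x \<noteq> 0")
        case True
        then obtain f0 where f0: "f0 \<in> F" "f0 x \<noteq> 0" by blast
        show ?thesis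
        proof (intro exI ballI)
          fix f assume f: "f \<in> F"
          define h where "h = (\<lambda>y. f0 x * f y + (- f x) * f0 y)"
          have g1: "(\<lambda>y. f0 x * f y) \<in> F" "(\<lambda>y. (- f x) * f0 y) \<in> F" using Fsc[OF f, of "f0 x"] Fsc[OF f0(1), of "- f x"] by auto
          have hF: "h \<in> F" unfolding h_def using Fadd[OF g1] .
          have "T h = (\<lambda>y. T (\<lambda>y. f0 x * f y) y + T (\<lambda>y. (- f x) * f0 y) y)"
            unfolding h_def using Tadd[OF g1] .
          also have "\<dots> = (\<lambda>y. f0 x * T f y + (- f x) * T f0 y)"
            using Tsc[OF f, of "f0 x"] Tsc[OF f0(1), of "- f x"] by (simp only:)
          finally have "T h x = f0 x * T f x - f x * T f0 x" by simp
          moreover have "T h x = 0" using z[OF hF] unfolding h_def by simp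
          ultimately have "T f x = (T f0 x / f0 x) * f x" using f0(2)
            by (simp add: field_simps)
          then show "adj T (point_eval x) f = (T f0 x / f0 x) * point_eval x f"
            unfolding adj_def point_eval_def by simp
        qed
      next
        case False
        then show ?thesis
          by (intro exI[of _ 0]) (auto simp: adj_def point_eval_def z)
      qed
    qed
  qed
  have 41: "?iv \<Longrightarrow> ?i"
  proof -
    assume ?iv
    then obtain w where w: "\<And>x f. f \<in> F \<Longrightarrow> T f x = w x * f x"
      unfolding adj_def point_eval_def by (metis comp_apply)
    show ?i by (rule exI[of _ w]) (auto simp: w)
  qed
  show ?thesis using 12 23 34 41 by blast
qed

end
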